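(* Consider random parity games on $n=|\mathcal{V}|$ nodes drawn according to the random model (R) with out-degree $d=2$. Then for every node $v$, $$\mathbb{P}(v\text{ is self-winning})\to 0\quad\text{as } n\to\infty.$$
   Context: A parity game is a tuple $(\mathcal{G},a,p)$ with $\mathcal{G}=(\mathcal{V},\mathcal{E})$ a finite directed graph, owners $a:\mathcal{V}\to\{-1,+1\}$ and priorities $p:\mathcal{V}\to\mathbb{N}$. Let $\mathrm{par}(k)=+1$ if $k$ is odd and $-1$ if $k$ is even. For $i\in\{-1,+1\}$, $\mathcal{G}_i$ is the subgraph induced by nodes owned by $i$. A self-winning cycle is a directed cycle in some $\mathcal{G}_i$ whose maximal priority $m$ satisfies $\mathrm{par}(m)=i$; a node is self-winning if it lies on such a cycle. Random model (R) with out-degree $d$: $\mathcal{G}$ is drawn uniformly at random among directed graphs on $n$ labelled nodes in which every node has out-degree exactly $d$; the owners $a(v)$ are i.i.d. uniform on $\{-1,+1\}$; the priorities $p(v)$ are i.i.d. from a distribution on $\mathbb{N}$ with $\mathbb{P}(p(v)\text{ even})=\mathbb{P}(p(v)\text{ odd})=1/2$; all independent. *)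

theory Defs
  imports "HOL-Probability.Probability"
begin

text \<open>Nodes are 0..<n. A graph is a successor map E : nat => nat set.
  Owners: True = player +1 (odd), False = player -1 (even).\<close>

definition out_regular_graphs :: "nat \<Rightarrow> nat \<Rightarrow> (nat \<Rightarrow> nat set) set" where
  "out_regular_graphs n d =
     {E. (\<forall>v<n. E v \<subseteq> {0..<n} \<and> card (E v) = d) \<and> (\<forall>v\<ge>n. E v = {})}"

definition graph_pmf :: "nat \<Rightarrow> nat \<Rightarrow> (nat \<Rightarrow> nat set) pmf" where
  "graph_pmf n d = pmf_of_set (out_regular_graphs n d)"

definition owner_pmf :: "nat \<Rightarrow> (nat \<Rightarrow> bool) pmf" where
  "owner_pmf n = Pi_pmf {0..<n} False (\<lambda>_. bernoulli_pmf (1/2))"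

definition prio_pmf :: "nat \<Rightarrow> nat pmf \<Rightarrow> (nat \<Rightarrow> nat) pmf" where
  "prio_pmf n P = Pi_pmf {0..<n} 0 (\<lambda>_. P)"

definition game_pmf :: "nat \<Rightarrow> nat \<Rightarrow> nat pmf \<Rightarrow>
    ((nat \<Rightarrow> nat set) \<times> (nat \<Rightarrow> bool) \<times> (nat \<Rightarrow> nat)) pmf" where
  "game_pmf n d P = pair_pmf (graph_pmf n d) (pair_pmf (owner_pmf n) (prio_pmf n P))"

definition is_cycle :: "nat \<Rightarrow> (nat \<Rightarrow> nat set) \<Rightarrow> nat list \<Rightarrow> bool" where
  "is_cycle n E xs \<longleftrightarrow> xs \<noteq> [] \<and> distinct xs \<and> set xs \<subseteq> {0..<n} \<and>
     (\<forall>j<length xs. xs ! ((j + 1) mod length xs) \<in> E (xs ! j))"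

definition self_winning_cycle ::
  "nat \<Rightarrow> (nat \<Rightarrow> nat set) \<Rightarrow> (nat \<Rightarrow> bool) \<Rightarrow> (nat \<Rightarrow> nat) \<Rightarrow> nat list \<Rightarrow> bool" where
  "self_winning_cycle n E a p xs \<longleftrightarrow> is_cycle n E xs \<and>
     (\<exists>i. (\<forall>x\<in>set xs. a x = i) \<and> (odd (Max (p ` set xs)) \<longleftrightarrow> i))"

definition self_winning ::
  "nat \<Rightarrow> (nat \<Rightarrow> nat set) \<Rightarrow> (nat \<Rightarrow> bool) \<Rightarrow> (nat \<Rightarrow> nat) \<Rightarrow> nat \<Rightarrow> bool" where
  "self_winning n E a p v \<longleftrightarrow> (\<exists>xs. self_winning_cycle n E a p xs \<and> v \<in> set xs)"

end

theory Submission imports Defs begin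

lemma prob_pair_times:
  "measure_pmf.prob (pair_pmf M N) (A \<times> B) = measure_pmf.prob M A * measure_pmf.prob N B"
proof -
  have "measure_pmf.prob (pair_pmf M N) (A \<times> B) =
        measure_pmf.prob (pair_pmf M N) ((A \<times> B) \<inter> set_pmf (pair_pmf M N))"
    by (rule measure_Int_set_pmf[symmetric])
  also have "(A \<times> B) \<inter> set_pmf (pair_pmf M N) = (A \<inter> set_pmf M) \<times> (B \<inter> set_pmf N)"
    by (auto simp: set_pair_pmf)
  also have "measure_pmf.prob (pair_pmf M N) \<dots> =
      measure_pmf.prob M (A \<inter> set_pmf M) * measure_pmf.prob N (B \<inter> set_pmf N)"
    by (rule measure_pmf_prob_product) (auto intro: countable_subset[OF _ countable_set_pmf])
  finally show ?thesis by (simp add: measure_Int_set_pmf)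
qed

definition S2 :: "nat \<Rightarrow> nat set set" where
  "S2 n = {S. S \<subseteq> {0..<n} \<and> card S = 2}"

lemma S2_finite: "finite (S2 n)"
  unfolding S2_def by (rule finite_subset[of _ "Pow {0..<n}"]) auto

lemma S2_card: "card (S2 n) = n choose 2"
  unfolding S2_def using n_subsets[of "{0..<n}" 2] by simp

lemma S2_ne: "n \<ge> 2 \<Longrightarrow> S2 n \<noteq> {}"
  unfolding S2_def by (rule ccontr) (auto dest: spec[of _ "{0,1}"])

lemma S2_with: assumes "w < n" shows "card (S2 n \<inter> {S. w \<in> S}) = n - 1"
proof -
  have "S2 n \<inter> {S. w \<in> S} = (\<lambda>u. {w,u}) ` ({0..<n} - {w})"
  proof (intro equalityI subsetI)
    fix S assume "S \<in> S2 n \<inter> {S. w \<in> S}"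
    then have S: "S \<subseteq> {0..<n}" "card S = 2" "w \<in> S" by (auto simp: S2_def)
    then obtain x y where xy: "S = {x,y}" "x \<noteq> y" by (auto simp: card_2_iff)
    show "S \<in> (\<lambda>u. {w,u}) ` ({0..<n} - {w})"
    proof (cases "x = w")
      case True then show ?thesis using xy S by (intro image_eqI[of _ _ y]) auto
    next
      case False then have "y = w" using xy S by auto
      then show ?thesis using xy S False by (intro image_eqI[of _ _ x]) auto
    qed
  next
    fix S assume "S \<in> (\<lambda>u. {w,u}) ` ({0..<n} - {w})"
    then show "S \<in> S2 n \<inter> {S. w \<in> S}" using assms by (auto simp: S2_def)
  qed
  moreover have "inj_on (\<lambda>u. {w,u}) ({0..<n} - {w})"
    by (auto simp: inj_on_def doubleton_eq_iff)
  ultimately show ?thesis using assms by (simp add: card_image)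
qed

lemma prob_S2_with: assumes "w < n" "n \<ge> 2"
  shows "measure_pmf.prob (pmf_of_set (S2 n)) {S. w \<in> S} = 2 / n"
proof -
  have "real (n choose 2) = real n * (real n - 1) / 2"
  proof -
    have ev: "even (n * (n - 1))" by (cases "even n") auto
    have "2 * (n choose 2) = n * (n - 1)" using ev by (simp add: choose_two)
    then have "real (2 * (n choose 2)) = real (n * (n - 1))" by (simp only:)
    then have "2 * real (n choose 2) = real n * (real n - 1)"
      using assms by (simp add: of_nat_diff)
    then show ?thesis by simp
  qed
  then show ?thesis
    using assms S2_finite S2_ne[of n]
    by (simp add: measure_pmf_of_set S2_with S2_card of_nat_diff field_simps)
qed

lemma graph_pmf_Pi: assumes "n \<ge> 2"
  shows "graph_pmf n 2 = Pi_pmf {0..<n} {} (\<lambda>_. pmf_of_set (S2 n))"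
proof -
  have "out_regular_graphs n 2 = PiE_dflt {0..<n} {} (\<lambda>_. S2 n)"
    by (auto simp: out_regular_graphs_def PiE_dflt_def S2_def)
  then show ?thesis unfolding graph_pmf_def
    using Pi_pmf_of_set[of "{0..<n}" "\<lambda>_. S2 n" "{}"] S2_finite S2_ne[OF assms] by simp
qed


definition Gev :: "nat list \<Rightarrow> (nat \<Rightarrow> nat set) set" where
  "Gev xs = {E. \<forall>j<length xs. xs ! ((j + 1) mod length xs) \<in> E (xs ! j)}"

definition Aev :: "nat list \<Rightarrow> (nat \<Rightarrow> bool) set" where
  "Aev xs = {a. \<forall>x\<in>set xs. a x} \<union> {a. \<forall>x\<in>set xs. \<not> a x}"

lemma prod_if_const:
  assumes "finite A" "X \<subseteq> A"
  shows "(\<Prod>u\<in>A. if u \<in> X then c else 1) = (c::real) ^ card X"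
proof -
  have "(\<Prod>u\<in>A. if u \<in> X then c else 1) = (\<Prod>u\<in>A \<inter> {u. u \<in> X}. c) * (\<Prod>u\<in>A \<inter> - {u. u \<in> X}. 1)"
    using prod.If_cases[OF assms(1), of "\<lambda>u. u \<in> X" "\<lambda>_. c" "\<lambda>_. 1"] by simp
  also have "A \<inter> {u. u \<in> X} = X" using assms by auto
  finally show ?thesis by simp
qed

lemma graph_prob:
  assumes n: "n \<ge> 2" and xs: "distinct xs" "set xs \<subseteq> {0..<n}" "xs \<noteq> []"
  shows "measure_pmf.prob (graph_pmf n 2) (Gev xs) \<le> (2 / n) ^ length xs"
proof -
  define k where "k = length xs"
  define B where "B u = {S. \<forall>j<k. xs ! j = u \<longrightarrow> xs ! ((j + 1) mod k) \<in> S}" for u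
  have sub: "Gev xs \<subseteq> Pi {0..<n} B"
    by (auto simp: Gev_def B_def k_def)
  have pB: "measure_pmf.prob (pmf_of_set (S2 n)) (B u) = (if u \<in> set xs then 2 / n else 1)"
    if "u \<in> {0..<n}" for u
  proof (cases "u \<in> set xs")
    case True
    then obtain j where j: "j < k" "xs ! j = u" by (auto simp: in_set_conv_nth k_def)
    have "B u = {S. xs ! ((j + 1) mod k) \<in> S}"
      using j xs(1) by (auto simp: B_def k_def nth_eq_iff_index_eq)
    moreover have "xs ! ((j + 1) mod k) < n"
    proof -
      have "(j + 1) mod k < length xs" using j xs(3) by (simp add: k_def)
      then have "xs ! ((j + 1) mod k) \<in> set xs" by (rule nth_mem)
      then show ?thesis using xs(2) by auto
    qed
    ultimately show ?thesis using True prob_S2_with n by simp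
  next
    case False
    then have "B u = UNIV" by (auto simp: B_def k_def)
    then show ?thesis using False by simp
  qed
  have "measure_pmf.prob (graph_pmf n 2) (Gev xs) \<le> measure_pmf.prob (graph_pmf n 2) (Pi {0..<n} B)"
    using sub by (intro measure_pmf.finite_measure_mono) auto
  also have "\<dots> = (\<Prod>u\<in>{0..<n}. measure_pmf.prob (pmf_of_set (S2 n)) (B u))"
    unfolding graph_pmf_Pi[OF n] by (rule measure_Pi_pmf_Pi) simp
  also have "\<dots> = (\<Prod>u\<in>{0..<n}. if u \<in> set xs then 2 / n else 1)"
    using pB by (intro prod.cong) auto
  also have "\<dots> = (2 / n) ^ length xs"
    using xs by (subst prod_if_const) (auto simp: distinct_card)
  finally show ?thesis .
qed

lemma owner_prob:
  assumes xs: "distinct xs" "set xs \<subseteq> {0..<n}"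
  shows "measure_pmf.prob (owner_pmf n) (Aev xs) \<le> 2 * (1 / 2) ^ length xs"
proof -
  define B where "B b u = (if u \<in> set xs then {b} else UNIV)" for b :: bool and u
  have eq: "{a. \<forall>x\<in>set xs. a x = b} = Pi {0..<n} (B b)" for b
    using xs by (auto simp: B_def Pi_def)
  have pb: "measure_pmf.prob (owner_pmf n) {a. \<forall>x\<in>set xs. a x = b} = (1 / 2) ^ length xs" for b
  proof -
    have "measure_pmf.prob (owner_pmf n) {a. \<forall>x\<in>set xs. a x = b}
        = (\<Prod>u\<in>{0..<n}. measure_pmf.prob (bernoulli_pmf (1/2)) (B b u))"
      unfolding eq owner_pmf_def by (rule measure_Pi_pmf_Pi) simp
    also have "\<dots> = (\<Prod>u\<in>{0..<n}. if u \<in> set xs then 1 / 2 else 1)"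
      by (intro prod.cong) (auto simp: B_def measure_pmf_single)
    also have "\<dots> = (1 / 2) ^ length xs"
      using xs by (subst prod_if_const) (auto simp: distinct_card)
    finally show ?thesis .
  qed
  have "Aev xs = {a. \<forall>x\<in>set xs. a x = True} \<union> {a. \<forall>x\<in>set xs. a x = False}"
    by (auto simp: Aev_def)
  then have "measure_pmf.prob (owner_pmf n) (Aev xs) \<le>
      measure_pmf.prob (owner_pmf n) {a. \<forall>x\<in>set xs. a x = True} +
      measure_pmf.prob (owner_pmf n) {a. \<forall>x\<in>set xs. a x = False}"
    by (simp add: measure_Un_le)
  then show ?thesis using pb[of True] pb[of False] by simp
qed


definition Ld :: "nat \<Rightarrow> nat \<Rightarrow> nat list set" where
  "Ld n v = {ys. distinct ys \<and> set ys \<subseteq> {0..<n} - {v}}"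

lemma Ld_finite: "finite (Ld n v)"
proof (rule finite_subset)
  show "Ld n v \<subseteq> {ys. set ys \<subseteq> {0..<n} \<and> length ys \<le> n}"
  proof
    fix ys assume "ys \<in> Ld n v"
    then have "distinct ys" "set ys \<subseteq> {0..<n}" by (auto simp: Ld_def)
    then have "length ys \<le> n" using card_mono[of "{0..<n}" "set ys"] by (simp add: distinct_card)
    then show "ys \<in> {ys. set ys \<subseteq> {0..<n} \<and> length ys \<le> n}" using \<open>set ys \<subseteq> _\<close> by simp
  qed
  show "finite {ys. set ys \<subseteq> {0..<n} \<and> length ys \<le> n}"
    by (rule finite_lists_length_le) simp
qed

lemma event_sub:
  assumes v: "v < n"
  shows "{(E, a, p). self_winning n E a p v} \<subseteq>
    (\<Union>xs\<in>(\<lambda>ys. v # ys) ` Ld n v. Gev xs \<times> (Aev xs \<times> UNIV))"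
proof (intro subsetI, clarify)
  fix E a p assume "self_winning n E a p v"
  then obtain xs where sw: "self_winning_cycle n E a p xs" and vin: "v \<in> set xs"
    by (auto simp: self_winning_def)
  from sw have cyc: "xs \<noteq> []" "distinct xs" "set xs \<subseteq> {0..<n}"
      "\<forall>j<length xs. xs ! ((j + 1) mod length xs) \<in> E (xs ! j)"
    and own: "\<exists>i. (\<forall>x\<in>set xs. a x = i)"
    by (auto simp: self_winning_cycle_def is_cycle_def)
  define k where "k = length xs"
  obtain i where i: "i < k" "xs ! i = v" using vin by (auto simp: in_set_conv_nth k_def)
  define ys where "ys = rotate i xs"
  have ys: "ys \<noteq> []" "distinct ys" "set ys = set xs" "length ys = k"
    using cyc by (auto simp: ys_def k_def)
  have hd: "hd ys = v" using cyc i by (simp add: ys_def hd_rotate_conv_nth k_def)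
  then have yseq: "ys = v # tl ys" using ys(1) by (cases ys) auto
  have tlLd: "tl ys \<in> Ld n v"
  proof -
    have d: "distinct (v # tl ys)" using ys(2) yseq by metis
    have s: "set (v # tl ys) \<subseteq> {0..<n}" using ys(3) cyc(3) yseq by metis
    show ?thesis using d s by (auto simp: Ld_def)
  qed
  have G: "E \<in> Gev ys"
    unfolding Gev_def
  proof (safe)
    fix j assume j: "j < length ys"
    have kpos: "k > 0" using i by simp
    have e1: "ys ! j = xs ! ((i + j) mod k)" using j ys by (simp add: ys_def nth_rotate k_def)
    have e2: "ys ! ((j + 1) mod length ys) = xs ! ((i + (j + 1) mod k) mod k)"
      using ys kpos by (simp add: ys_def nth_rotate k_def)
    have "(i + (j + 1) mod k) mod k = ((i + j) mod k + 1) mod k"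
      by (metis add.assoc mod_add_left_eq mod_add_right_eq)
    moreover have "(i + j) mod k < length xs" using kpos by (simp add: k_def)
    ultimately show "ys ! ((j + 1) mod length ys) \<in> E (ys ! j)"
      using cyc(4) e1 e2 by (simp add: k_def)
  qed
  have A: "a \<in> Aev ys" using own ys(3) by (auto simp: Aev_def)
  have "ys \<in> (\<lambda>ys. v # ys) ` Ld n v" using tlLd yseq by (metis image_eqI)
  then show "(E, a, p) \<in> (\<Union>xs\<in>(\<lambda>ys. v # ys) ` Ld n v. Gev xs \<times> (Aev xs \<times> UNIV))"
    using G A by blast
qed

lemma single_bound:
  assumes n: "n \<ge> 2" and xs: "distinct xs" "set xs \<subseteq> {0..<n}" "xs \<noteq> []"
  shows "measure_pmf.prob (game_pmf n 2 P) (Gev xs \<times> (Aev xs \<times> UNIV)) \<le> 2 / real n ^ length xs"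
proof -
  have "measure_pmf.prob (game_pmf n 2 P) (Gev xs \<times> (Aev xs \<times> UNIV)) =
      measure_pmf.prob (graph_pmf n 2) (Gev xs) * (measure_pmf.prob (owner_pmf n) (Aev xs) * 1)"
    unfolding game_pmf_def prob_pair_times by simp
  also have "\<dots> \<le> (2 / n) ^ length xs * (2 * (1 / 2) ^ length xs)"
    using graph_prob[OF n xs] owner_prob[OF xs(1,2)]
    by (simp add: mult_mono)
  also have "\<dots> = 2 / real n ^ length xs"
    by (simp add: power_divide field_simps)
  finally show ?thesis .
qed


definition cc :: "nat \<Rightarrow> nat \<Rightarrow> real" where
  "cc n m = real (\<Prod>{n - 1 - m + 1..n - 1}) / real n ^ m"

lemma card_len:
  assumes v: "v < n" and m: "m < n"
  shows "card {ys \<in> Ld n v. length ys = m} = \<Prod>{n - 1 - m + 1..n - 1}"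
proof -
  have "{ys \<in> Ld n v. length ys = m} = {xs. length xs = m \<and> distinct xs \<and> set xs \<subseteq> {0..<n} - {v}}"
    by (auto simp: Ld_def)
  moreover have "card ({0..<n} - {v}) = n - 1" using v by simp
  ultimately show ?thesis using m card_lists_distinct_length_eq[of "{0..<n} - {v}" m] by simp
qed

lemma total_bound:
  assumes n: "n \<ge> 2" and v: "v < n"
  shows "measure_pmf.prob (game_pmf n 2 P) {(E, a, p). self_winning n E a p v}
     \<le> (\<Sum>m<n. 2 / real n * cc n m)"
proof -
  define L where "L = (\<lambda>ys. v # ys) ` Ld n v"
  define F where "F xs = Gev xs \<times> (Aev xs \<times> (UNIV :: (nat \<Rightarrow> nat) set))" for xs
  have finL: "finite L" using Ld_finite by (simp add: L_def)
  have Lprop: "distinct xs \<and> set xs \<subseteq> {0..<n} \<and> xs \<noteq> []" if "xs \<in> L" for xs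
    using that v by (auto simp: L_def Ld_def)
  have "measure_pmf.prob (game_pmf n 2 P) {(E, a, p). self_winning n E a p v}
      \<le> measure_pmf.prob (game_pmf n 2 P) (\<Union>xs\<in>L. F xs)"
    using event_sub[OF v] by (intro measure_pmf.finite_measure_mono) (auto simp: L_def F_def)
  also have "\<dots> \<le> (\<Sum>xs\<in>L. measure_pmf.prob (game_pmf n 2 P) (F xs))"
    using finL by (intro measure_pmf.finite_measure_subadditive_finite) auto
  also have "\<dots> \<le> (\<Sum>xs\<in>L. 2 / real n ^ length xs)"
    using Lprop single_bound[OF n] by (intro sum_mono) (auto simp: F_def)
  also have "\<dots> = (\<Sum>ys\<in>Ld n v. 2 / real n ^ Suc (length ys))"
    unfolding L_def by (subst sum.reindex) (auto simp: inj_on_def)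
  also have "\<dots> = (\<Sum>m<n. \<Sum>ys\<in>{ys \<in> Ld n v. length ys = m}. 2 / real n ^ Suc (length ys))"
  proof (rule sum.group[symmetric])
    show "finite (Ld n v)" by (rule Ld_finite)
    show "finite {..<n}" by simp
    show "length ` Ld n v \<subseteq> {..<n}"
    proof
      fix m assume "m \<in> length ` Ld n v"
      then obtain ys where ys: "ys \<in> Ld n v" "m = length ys" by auto
      then have "distinct ys" "set ys \<subseteq> {0..<n} - {v}" by (auto simp: Ld_def)
      then have "length ys \<le> n - 1"
        using card_mono[of "{0..<n} - {v}" "set ys"] v by (simp add: distinct_card)
      then show "m \<in> {..<n}" using ys n by simp
    qed
  qed
  also have "\<dots> = (\<Sum>m<n. 2 / real n * cc n m)"
  proof (intro sum.cong refl)
    fix m assume "m \<in> {..<n}"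
    then have "(\<Sum>ys\<in>{ys \<in> Ld n v. length ys = m}. 2 / real n ^ Suc (length ys))
        = real (\<Prod>{n - 1 - m + 1..n - 1}) * (2 / real n ^ Suc m)"
      using card_len[OF v, of m] by simp
    also have "\<dots> = 2 / real n * cc n m" by (simp add: cc_def)
    finally show "(\<Sum>ys\<in>{ys \<in> Ld n v. length ys = m}. 2 / real n ^ Suc (length ys)) = 2 / real n * cc n m" .
  qed
  finally show ?thesis .
qed


lemma cc_nonneg: "cc n m \<ge> 0" unfolding cc_def by (intro divide_nonneg_nonneg of_nat_0_le_iff zero_le_power)

lemma cc_0: "n > 0 \<Longrightarrow> cc n 0 = 1" by (simp add: cc_def)

lemma cc_Suc:
  assumes "Suc m \<le> n - 1" "n > 0"
  shows "cc n (Suc m) = cc n m * real (n - 1 - m) / real n"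
proof -
  define N where "N = n - 1"
  have "{N - Suc m + 1..N} = insert (N - m) {Suc (N - m)..N}"
    using assms by (subst atLeastAtMost_insertL) (auto simp: N_def)
  moreover have "N - m \<notin> {Suc (N - m)..N}" by simp
  ultimately have "\<Prod>{N - Suc m + 1..N} = (N - m) * \<Prod>{N - m + 1..N}" by simp
  then show ?thesis using assms by (simp add: cc_def N_def field_simps)
qed

lemma cc_le1: "n > 0 \<Longrightarrow> m \<le> n - 1 \<Longrightarrow> cc n m \<le> 1"
proof (induction m)
  case 0 then show ?case by (simp add: cc_0)
next
  case (Suc m)
  then have "cc n (Suc m) = cc n m * (real (n - 1 - m) / real n)" by (simp add: cc_Suc)
  also have "\<dots> \<le> cc n m * 1"
    using Suc.prems by (intro mult_left_mono cc_nonneg) auto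
  also have "\<dots> \<le> 1" using Suc by simp
  finally show ?case .
qed

lemma cc_geom:
  assumes "n > 0" "s + d \<le> n - 1"
  shows "cc n (s + d) \<le> (1 - real s / real n) ^ d"
  using assms(2)
proof (induction d)
  case 0 then show ?case using cc_le1[OF assms(1)] by simp
next
  case (Suc d)
  have "cc n (s + Suc d) = cc n (s + d) * (real (n - 1 - (s + d)) / real n)"
    using Suc.prems assms(1) cc_Suc[of "s + d" n] by simp
  also have "\<dots> \<le> (1 - real s / real n) ^ d * (1 - real s / real n)"
  proof (rule mult_mono)
    show "cc n (s + d) \<le> (1 - real s / real n) ^ d" using Suc by simp
    have "real (n - 1 - (s + d)) \<le> real n - real s" using Suc.prems by linarith
    then show "real (n - 1 - (s + d)) / real n \<le> 1 - real s / real n"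
      using assms(1) by (simp add: field_simps)
    have "real s \<le> real n" using Suc.prems by linarith
    then show "0 \<le> (1 - real s / real n) ^ d" using assms(1) by (simp add: field_simps)
  qed (simp add: cc_nonneg)
  finally show ?case by (simp add: mult.commute)
qed

lemma cc_sum:
  assumes "0 < s" "s \<le> n"
  shows "(\<Sum>m<n. cc n m) \<le> real s + real n / real s"
proof -
  define r where "r = 1 - real s / real n"
  have n0: "n > 0" using assms by simp
  have r: "0 \<le> r" "r < 1" using assms by (auto simp: r_def field_simps)
  have split: "{..<n} = {..<s} \<union> {s..<n}" using assms by auto
  have "(\<Sum>m<n. cc n m) = (\<Sum>m<s. cc n m) + (\<Sum>m\<in>{s..<n}. cc n m)"
    unfolding split by (rule sum.union_disjoint) auto
  also have "(\<Sum>m<s. cc n m) \<le> (\<Sum>m<s. 1)"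
    using assms n0 by (intro sum_mono cc_le1) auto
  also have "(\<Sum>m\<in>{s..<n}. cc n m) = (\<Sum>d\<in>{0..<n - s}. cc n (s + d))"
    by (subst sum.atLeastLessThan_shift_0) (simp add: comp_def)
  also have "\<dots> \<le> (\<Sum>d\<in>{0..<n - s}. r ^ d)"
    using n0 by (intro sum_mono) (auto simp: r_def intro!: cc_geom)
  also have "(\<Sum>d\<in>{0..<n - s}. r ^ d) = (1 - r ^ (n - s)) / (1 - r)"
    using r sum_gp_strict[of r "n - s"] by (simp add: atLeast0LessThan)
  also have "\<dots> \<le> 1 / (1 - r)"
    using r by (intro divide_right_mono) auto
  also have "1 / (1 - r) = real n / real s" using assms by (simp add: r_def)
  finally show ?thesis by simp
qed


lemma prob_bound:
  assumes "n \<ge> 2" "v < n" "0 < s" "s \<le> n"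
  shows "measure_pmf.prob (game_pmf n 2 P) {(E, a, p). self_winning n E a p v}
     \<le> 2 * real s / real n + 2 / real s"
proof -
  have "measure_pmf.prob (game_pmf n 2 P) {(E, a, p). self_winning n E a p v}
     \<le> (\<Sum>m<n. 2 / real n * cc n m)" by (rule total_bound[OF assms(1,2)])
  also have "\<dots> = 2 / real n * (\<Sum>m<n. cc n m)" by (simp add: sum_distrib_left)
  also have "\<dots> \<le> 2 / real n * (real s + real n / real s)"
    using cc_sum[OF assms(3,4)] by (intro mult_left_mono) auto
  also have "\<dots> = 2 * real s / real n + 2 / real s" using assms by (simp add: field_simps)
  finally show ?thesis .
qed

theorem mainTheorem5:
  fixes P :: "nat pmf" and v :: nat
  assumes "measure_pmf.prob P {k. even k} = 1/2"
      and "measure_pmf.prob P {k. odd k} = 1/2"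
  shows "(\<lambda>n. measure_pmf.prob (game_pmf n 2 P)
            {(E, a, p). self_winning n E a p v}) \<longlonglongrightarrow> 0"
proof (rule LIMSEQ_I)
  fix r :: real assume r: "0 < r"
  define s where "s = nat \<lceil>4 / r\<rceil> + 1"
  have s0: "0 < s" by (simp add: s_def)
  have "real s > 4 / r" unfolding s_def by linarith
  then have s1: "2 / real s < r / 2" using r s0 by (simp add: field_simps)
  define no where "no = max (v + 2) (s + nat \<lceil>4 * real s / r\<rceil> + 1)"
  show "\<exists>no. \<forall>n\<ge>no. norm (measure_pmf.prob (game_pmf n 2 P)
            {(E, a, p). self_winning n E a p v} - 0) < r"
  proof (intro exI allI impI)
    fix n assume n: "no \<le> n"
    have n2: "n \<ge> 2" "v < n" "s \<le> n" using n by (auto simp: no_def)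
    have "real n > 4 * real s / r" using n unfolding no_def by linarith
    then have n3: "2 * real s / real n < r / 2" using r s0 n2 by (simp add: field_simps)
    have "measure_pmf.prob (game_pmf n 2 P) {(E, a, p). self_winning n E a p v} < r"
      using prob_bound[OF n2(1,2) s0 n2(3), of P] n3 s1 by linarith
    then show "norm (measure_pmf.prob (game_pmf n 2 P)
            {(E, a, p). self_winning n E a p v} - 0) < r" by simp
  qed
qed

end
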